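(* Let $n\ge0$ and $k\ge1$ be integers, $\rho\ne0$ real, $0\le q<1$, and $z$ a complex number. Then $$\widehat c_{n,\rho,q}^{(k)}(z)=(-1)^n\sum_{m=0}^n S_1(n,m)\rho^{n-m}\sum_{i=0}^m\binom{m}{i}\frac{(-z)^i}{[m-i+1]_q^k}=(-1)^n\sum_{m=0}^n S_1\!\left(n,m,-\frac{z}{\rho}\right)\frac{\rho^{n-m}}{[m+1]_q^k}.$$
   Context: For real $0\le q<1$ (with $0^0=1$), $[x]_q=\frac{1-q^x}{1-q}$. Jackson's $q$-integral: $\int_0^1 f(x)\,d_qx=(1-q)\sum_{j\ge0} f(q^j)q^j$; multiple integrals are iterated. $(x)_n=x(x-1)\cdots(x-n+1)$, $(x)_0=1$. The $q$-poly-Cauchy polynomials of the second kind with parameter $\rho$ are $$\widehat c_{n,\rho,q}^{(k)}(z)=\rho^n\underbrace{\int_0^1\cdots\int_0^1}_{k}\left(\frac{-x_1\cdots x_k+z}{\rho}\right)_n d_qx_1\cdots d_qx_k.$$ The unsigned Stirling numbers of the first kind are defined by $x(x+1)\cdots(x+n-1)=\sum_{m=0}^n S_1(n,m)x^m$. The weighted Stirling numbers of the first kind $S_1(n,m,x)$ are defined by $\frac{(1-t)^{-x}(-\ln(1-t))^m}{m!}=\sum_{n\ge0} S_1(n,m,x)\frac{t^n}{n!}$. *)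

theory Defs
  imports "HOL-Analysis.Analysis" "HOL-Combinatorics.Stirling"
          "HOL-Computational_Algebra.Formal_Power_Series"
begin

definition qnum :: "real \<Rightarrow> nat \<Rightarrow> real" where
  "qnum q x = (1 - q ^ x) / (1 - q)"

definition jackson_int :: "real \<Rightarrow> (real \<Rightarrow> complex) \<Rightarrow> complex" where
  "jackson_int q f = of_real (1 - q) * (\<Sum>j. f (q ^ j) * of_real (q ^ j))"

text \<open>k-fold iterated Jackson integral of a function of k variables (given as a list).
  The first list element is the outermost integration variable.\<close>
fun multi_jackson_int :: "real \<Rightarrow> nat \<Rightarrow> (real list \<Rightarrow> complex) \<Rightarrow> complex" where
  "multi_jackson_int q 0 G = G []"
| "multi_jackson_int q (Suc k) G = jackson_int q (\<lambda>x. multi_jackson_int q k (\<lambda>xs. G (x # xs)))"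

definition falling :: "complex \<Rightarrow> nat \<Rightarrow> complex" where
  "falling x n = (\<Prod>i<n. x - of_nat i)"

definition qpolycauchy2 :: "nat \<Rightarrow> real \<Rightarrow> real \<Rightarrow> nat \<Rightarrow> complex \<Rightarrow> complex" where
  "qpolycauchy2 n \<rho> q k z = of_real \<rho> ^ n *
     multi_jackson_int q k (\<lambda>xs. falling ((- of_real (prod_list xs) + z) / of_real \<rho>) n)"

text \<open>Weighted Stirling numbers of the first kind, via the generating function
  (1-t)^(-x) (-ln(1-t))^m / m! = sum_n S1(n,m,x) t^n/n!.\<close>
definition weighted_stirling1 :: "nat \<Rightarrow> nat \<Rightarrow> complex \<Rightarrow> complex" where
  "weighted_stirling1 n m x = fact n * fps_nth
     ((fps_binomial (- x) oo (- fps_X)) * (- (fps_ln 1 oo (- fps_X))) ^ m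
       * fps_const (1 / fact m)) n"

end

theory Submission
  imports Defs
begin


definition AA :: "complex \<Rightarrow> complex fps" where
  "AA x = Abs_fps (\<lambda>n. pochhammer x n / fact n)"
definition LL :: "complex fps" where
  "LL = Abs_fps (\<lambda>n. if n = 0 then 0 else 1 / of_nat n)"

lemma AA_eq: "fps_binomial (-x) oo (-fps_X) = AA x"
  by (simp add: fps_eq_iff fps_compose_uminus' AA_def gbinomial_pochhammer)

lemma LL_eq: "-(fps_ln 1 oo -fps_X) = LL"
  apply (simp add: fps_eq_iff fps_compose_uminus' LL_def fps_ln_nth)
  apply (intro allI impI)
  subgoal for n by (cases n) auto
  done

lemma cnz1: "(of_nat m :: complex) + 1 \<noteq> 0"
proof -
  have "(of_nat m :: complex) + 1 = of_nat (Suc m)" by simp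
  then show ?thesis by (metis of_nat_eq_0_iff nat.distinct(1))
qed

lemma cnz2: "(of_nat m :: complex) + 2 \<noteq> 0"
proof -
  have "(of_nat m :: complex) + 2 = of_nat (Suc (Suc m))" by simp
  then show ?thesis by (metis of_nat_eq_0_iff nat.distinct(1))
qed

lemma coeff_rec:
  assumes "(1 - fps_X) * fps_deriv F = (G :: complex fps)"
  shows "of_nat (Suc n) * fps_nth F (Suc n) - of_nat n * fps_nth F n = fps_nth G n"
proof -
  have e: "(1 - fps_X) * fps_deriv F = fps_deriv F - fps_X * fps_deriv F" by (simp add: algebra_simps)
  have "fps_nth G n = fps_nth (fps_deriv F - fps_X * fps_deriv F) n"
    using assms e by simp
  also have "\<dots> = of_nat (Suc n) * fps_nth F (Suc n) - of_nat n * fps_nth F n"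
    by (cases n) (simp_all add: fps_X_mult_nth algebra_simps)
  finally show ?thesis by simp
qed

lemma cnz1': "1 + (of_nat m :: complex) \<noteq> 0"
  using cnz1[of m] by (simp add: add.commute)

lemma aux1: "(c::complex) \<noteq> 0 \<Longrightarrow> c * (a / (c * b)) = a / b"
  by (cases "b = 0") (simp_all add: field_simps)

lemma aux2: "(c::complex) \<noteq> 0 \<Longrightarrow> a / (c*b) * (y * p + c * q) = y * (a / (c*b) * p) + a / b * q"
  by (cases "b = 0") (simp_all add: field_simps)

lemma Ak: "of_nat (Suc j) * fps_nth (AA x) (Suc j) = (x + of_nat j) * fps_nth (AA x) j"
proof -
  have f2: "fact (Suc j) = of_nat (Suc j) * (fact j :: complex)"
    by (simp add: fact_Suc)
  have nz: "(fact j :: complex) \<noteq> 0" "(of_nat (Suc j) :: complex) \<noteq> 0"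
    by simp (metis of_nat_eq_0_iff nat.distinct(1))
  show ?thesis unfolding AA_def fps_nth_Abs_fps f2 pochhammer_Suc
    by (subst aux1[OF nz(2)]) (simp add: algebra_simps)
qed

lemma Ak': "of_nat n * fps_nth (AA x) n = (if n = 0 then 0 else (x + of_nat (n - 1)) * fps_nth (AA x) (n - 1))"
  using Ak[of "n - 1" x] by (cases n) auto

lemma dA: "(1 - fps_X) * fps_deriv (AA x) = fps_const x * AA x"
proof (rule fps_ext)
  fix n
  have "fps_nth ((1 - fps_X) * fps_deriv (AA x)) n = fps_nth (fps_deriv (AA x) - fps_X * fps_deriv (AA x)) n"
    by (simp add: algebra_simps)
  also have "\<dots> = (x + of_nat n) * fps_nth (AA x) n - of_nat n * fps_nth (AA x) n"
    using Ak[of n x] Ak'[of n x] by (cases n) (auto simp: fps_X_mult_nth algebra_simps)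
  also have "\<dots> = x * fps_nth (AA x) n" by (simp add: algebra_simps)
  finally show "fps_nth ((1 - fps_X) * fps_deriv (AA x)) n = fps_nth (fps_const x * AA x) n" by simp
qed

lemma dL: "(1 - fps_X) * fps_deriv LL = 1"
proof (rule fps_ext)
  fix n
  have "fps_nth ((1 - fps_X) * fps_deriv LL) n = fps_nth (fps_deriv LL - fps_X * fps_deriv LL) n"
    by (simp add: algebra_simps)
  also have "\<dots> = fps_nth (1::complex fps) n"
    using cnz1 cnz2 by (cases n) (auto simp: LL_def fps_X_mult_nth field_simps)
  finally show "fps_nth ((1 - fps_X) * fps_deriv LL) n = fps_nth (1::complex fps) n" .
qed

lemma dP: "(1 - fps_X) * fps_deriv (AA x * LL ^ Suc m) =
   fps_const x * (AA x * LL ^ Suc m) + fps_const (of_nat (Suc m)) * (AA x * LL ^ m)"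
proof -
  have dp: "fps_deriv (LL ^ Suc m) = fps_const (of_nat (Suc m)) * fps_deriv LL * LL ^ m"
    by (subst fps_deriv_power) simp
  have "(1 - fps_X) * fps_deriv (AA x * LL ^ Suc m) =
     ((1 - fps_X) * fps_deriv (AA x)) * LL ^ Suc m + fps_const (of_nat (Suc m)) * AA x * ((1 - fps_X) * fps_deriv LL) * LL ^ m"
    unfolding fps_deriv_mult dp by (simp only: algebra_simps)
  also have "\<dots> = fps_const x * (AA x * LL ^ Suc m) + fps_const (of_nat (Suc m)) * (AA x * LL ^ m)"
    unfolding dA dL by (simp add: algebra_simps)
  finally show ?thesis .
qed

definition ww :: "complex \<Rightarrow> nat \<Rightarrow> nat \<Rightarrow> complex" where
  "ww x n m = fact n / fact m * fps_nth (AA x * LL ^ m) n"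

lemma ww_0: "ww x 0 m = (if m = 0 then 1 else 0)"
  by (simp add: ww_def AA_def LL_def fps_nth_power_0)

lemma ww_Suc0: "ww x (Suc n) 0 = (of_nat n + x) * ww x n 0"
proof -
  have "of_nat (Suc n) * fps_nth (AA x) (Suc n) - of_nat n * fps_nth (AA x) n = x * fps_nth (AA x) n"
    using coeff_rec[OF dA] by simp
  then have h: "of_nat (Suc n) * fps_nth (AA x) (Suc n) = (of_nat n + x) * fps_nth (AA x) n"
    by (simp add: algebra_simps)
  have "ww x (Suc n) 0 = fact n * (of_nat (Suc n) * fps_nth (AA x) (Suc n))"
    unfolding ww_def by (simp add: fact_Suc algebra_simps)
  also have "\<dots> = (of_nat n + x) * ww x n 0"
    unfolding h ww_def by simp
  finally show ?thesis .
qed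

lemma ww_SucSuc: "ww x (Suc n) (Suc m) = (of_nat n + x) * ww x n (Suc m) + ww x n m"
proof -
  have "of_nat (Suc n) * fps_nth (AA x * LL ^ Suc m) (Suc n) - of_nat n * fps_nth (AA x * LL ^ Suc m) n
     = x * fps_nth (AA x * LL ^ Suc m) n + of_nat (Suc m) * fps_nth (AA x * LL ^ m) n"
    using coeff_rec[OF dP] by simp
  then have h: "of_nat (Suc n) * fps_nth (AA x * LL ^ Suc m) (Suc n) =
     (of_nat n + x) * fps_nth (AA x * LL ^ Suc m) n + of_nat (Suc m) * fps_nth (AA x * LL ^ m) n"
    by (simp add: algebra_simps)
  have fm: "(fact (Suc m) :: complex) = of_nat (Suc m) * fact m" by (simp add: fact_Suc)
  have nz: "(of_nat (Suc m) :: complex) \<noteq> 0" "(fact m :: complex) \<noteq> 0"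
    by (metis of_nat_eq_0_iff nat.distinct(1)) simp
  have "ww x (Suc n) (Suc m) = fact n / fact (Suc m) * (of_nat (Suc n) * fps_nth (AA x * LL ^ Suc m) (Suc n))"
    unfolding ww_def fact_Suc[of n] by (simp only: times_divide_eq_left times_divide_eq_right mult_ac)
  also have "\<dots> = (of_nat n + x) * ww x n (Suc m) + ww x n m"
    unfolding h ww_def fm by (rule aux2[OF nz(1)])
  finally show ?thesis .
qed

lemma ww_weighted: "weighted_stirling1 n m x = ww x n m"
  unfolding weighted_stirling1_def ww_def AA_eq LL_eq
  by (simp add: fps_mult_right_const_nth)



lemma qpow_lt1: "0 \<le> q \<Longrightarrow> q < (1::real) \<Longrightarrow> q ^ Suc e < 1"
proof -
  assume q: "0 \<le> q" "q < 1"
  have "q ^ e \<le> 1" using q by (simp add: power_le_one)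
  then have "q * q ^ e \<le> q * 1" using q by (intro mult_left_mono) auto
  then show ?thesis using q by simp
qed

lemma jack1:
  assumes q: "0 \<le> q" "q < 1" and T: "finite T"
  shows "jackson_int q (\<lambda>x. \<Sum>t\<in>T. c t * complex_of_real x ^ e t)
       = (\<Sum>t\<in>T. c t / complex_of_real (qnum q (e t + 1)))"
proof -
  define r where "r t = complex_of_real (q ^ Suc (e t))" for t
  have rn: "norm (r t) < 1" for t
  proof -
    have "q ^ Suc (e t) < 1" using q by (rule qpow_lt1)
    moreover have "norm (r t) = q ^ Suc (e t)" unfolding r_def norm_of_real using q by simp
    ultimately show ?thesis by simp
  qed
  have termeq: "(\<Sum>t\<in>T. c t * complex_of_real (q ^ j) ^ e t) * complex_of_real (q ^ j)
      = (\<Sum>t\<in>T. c t * r t ^ j)" for j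
    unfolding sum_distrib_right r_def
    by (intro sum.cong refl) (simp add: power_mult[symmetric] power_mult_distrib mult.commute mult.left_commute)
  have "(\<Sum>j. (\<Sum>t\<in>T. c t * complex_of_real (q ^ j) ^ e t) * complex_of_real (q ^ j))
     = (\<Sum>j. \<Sum>t\<in>T. c t * r t ^ j)" unfolding termeq ..
  also have "\<dots> = (\<Sum>t\<in>T. \<Sum>j. c t * r t ^ j)"
    by (rule suminf_sum) (intro summable_mult summable_geometric rn)
  also have "\<dots> = (\<Sum>t\<in>T. c t / (1 - r t))"
    using rn by (intro sum.cong refl) (simp add: suminf_mult summable_geometric suminf_geometric)
  finally have eq: "(\<Sum>j. (\<Sum>t\<in>T. c t * complex_of_real (q ^ j) ^ e t) * complex_of_real (q ^ j))
      = (\<Sum>t\<in>T. c t / (1 - r t))" .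
  have "jackson_int q (\<lambda>x. \<Sum>t\<in>T. c t * complex_of_real x ^ e t) = complex_of_real (1 - q) * (\<Sum>t\<in>T. c t / (1 - r t))"
    unfolding jackson_int_def eq ..
  also have "\<dots> = (\<Sum>t\<in>T. c t / complex_of_real (qnum q (e t + 1)))"
    unfolding sum_distrib_left
  proof (intro sum.cong refl)
    fix t
    have "1 - q \<noteq> 0" using q by simp
    then show "complex_of_real (1 - q) * (c t / (1 - r t)) = c t / complex_of_real (qnum q (e t + 1))"
      by (simp add: qnum_def r_def field_simps)
  qed
  finally show ?thesis .
qed

lemma multi_jack:
  assumes q: "0 \<le> q" "q < 1" and T: "finite T"
  shows "multi_jackson_int q k (\<lambda>xs. \<Sum>t\<in>T. c t * complex_of_real (prod_list xs) ^ e t)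
       = (\<Sum>t\<in>T. c t / complex_of_real (qnum q (e t + 1)) ^ k)"
proof (induction k arbitrary: c)
  case 0
  then show ?case by simp
next
  case (Suc k)
  have "(\<lambda>x. multi_jackson_int q k (\<lambda>xs. \<Sum>t\<in>T. c t * complex_of_real (prod_list (x # xs)) ^ e t))
     = (\<lambda>x. multi_jackson_int q k (\<lambda>xs. \<Sum>t\<in>T. (c t * complex_of_real x ^ e t) * complex_of_real (prod_list xs) ^ e t))"
    by (simp add: power_mult_distrib mult_ac)
  also have "\<dots> = (\<lambda>x. \<Sum>t\<in>T. (c t / complex_of_real (qnum q (e t + 1)) ^ k) * complex_of_real x ^ e t)"
    unfolding Suc.IH by (simp add: field_simps)
  finally have e1: "(\<lambda>x. multi_jackson_int q k (\<lambda>xs. \<Sum>t\<in>T. c t * complex_of_real (prod_list (x # xs)) ^ e t))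
     = (\<lambda>x. \<Sum>t\<in>T. (c t / complex_of_real (qnum q (e t + 1)) ^ k) * complex_of_real x ^ e t)" .
  show ?case
    by (simp only: multi_jackson_int.simps e1 jack1[OF q T]) (simp add: field_simps)
qed



lemma ww_zero: "n < m \<Longrightarrow> ww x n m = 0"
proof (induction n arbitrary: m)
  case 0 then show ?case by (simp add: ww_0)
next
  case (Suc n)
  then obtain m' where m: "m = Suc m'" "n < m'" by (cases m) auto
  then show ?case using Suc.IH[of m'] Suc.IH[of "Suc m'"] by (simp add: ww_SucSuc)
qed

lemma ww_gen: "(\<Sum>m\<le>n. ww x n m * u ^ m) = pochhammer (x + u) n"
proof (induction n)
  case 0 then show ?case by (simp add: ww_0)
next
  case (Suc n)
  let ?G = "\<Sum>m\<le>n. ww x n m * u ^ m"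
  have "(\<Sum>m\<le>Suc n. ww x (Suc n) m * u ^ m) =
      ww x (Suc n) 0 + (\<Sum>m\<le>n. ww x (Suc n) (Suc m) * u ^ Suc m)"
    by (subst sum.atMost_Suc_shift) simp
  also have "\<dots> = (of_nat n + x) * (ww x n 0 + (\<Sum>m\<le>n. ww x n (Suc m) * u ^ Suc m))
        + u * ?G"
    by (simp add: ww_Suc0 ww_SucSuc algebra_simps sum.distrib sum_distrib_left)
  also have "ww x n 0 + (\<Sum>m\<le>n. ww x n (Suc m) * u ^ Suc m) = (\<Sum>m\<le>Suc n. ww x n m * u ^ m)"
    by (subst sum.atMost_Suc_shift) simp
  also have "\<dots> = ?G" by (simp add: ww_zero)
  finally show ?case using Suc.IH by (simp add: pochhammer_Suc algebra_simps)
qed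

lemma ww_explicit:
  assumes "m \<le> n"
  shows "ww x n m = (\<Sum>l\<le>n. of_nat (stirling n l) * of_nat (l choose m) * x ^ (l - m))"
proof -
  define d where "d m = (\<Sum>l\<le>n. of_nat (stirling n l) * of_nat (l choose m) * x ^ (l - m))" for m
  have "(\<Sum>m\<le>n. ww x n m * u ^ m) = (\<Sum>m\<le>n. d m * u ^ m)" for u
  proof -
    have "(\<Sum>m\<le>n. ww x n m * u ^ m) = (\<Sum>l\<le>n. of_nat (stirling n l) * (u + x) ^ l)"
      by (simp add: ww_gen stirling_pochhammer add.commute)
    also have "\<dots> = (\<Sum>l\<le>n. \<Sum>m\<le>n. of_nat (stirling n l) * of_nat (l choose m) * x ^ (l - m) * u ^ m)"
    proof (intro sum.cong refl)
      fix l assume l: "l \<in> {..n}"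
      have "(u + x) ^ l = (\<Sum>m\<le>l. of_nat (l choose m) * u ^ m * x ^ (l - m))"
        by (rule binomial_ring)
      also have "\<dots> = (\<Sum>m\<le>n. of_nat (l choose m) * u ^ m * x ^ (l - m))"
        using l by (intro sum.mono_neutral_left) auto
      finally show "of_nat (stirling n l) * (u + x) ^ l =
          (\<Sum>m\<le>n. of_nat (stirling n l) * of_nat (l choose m) * x ^ (l - m) * u ^ m)"
        by (simp add: sum_distrib_left mult_ac)
    qed
    also have "\<dots> = (\<Sum>m\<le>n. d m * u ^ m)"
      unfolding d_def sum_distrib_right by (rule sum.swap)
    finally show ?thesis .
  qed
  then have "\<forall>m\<le>n. ww x n m = d m"
    using polyfun_eq_coeffs[of "ww x n" n d] by blast
  then show ?thesis using assms d_def by simp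
qed

lemma falling_poch: "falling y n = (-1) ^ n * pochhammer (- y) n"
proof -
  have "falling y n = (\<Prod>i<n. (-1) * (- y + of_nat i))"
    unfolding falling_def by (intro prod.cong refl) simp
  also have "\<dots> = (-1) ^ n * pochhammer (- y) n"
    unfolding prod.distrib prod_constant card_lessThan pochhammer_prod atLeast0LessThan ..
  finally show ?thesis .
qed



lemma pointwise:
  fixes X R z :: complex
  assumes R: "R \<noteq> 0"
  shows "falling ((- X + z) / R) n =
    (\<Sum>p\<in>Sigma {..n} (\<lambda>m. {..m}). (case p of (m, i) \<Rightarrow>
        (-1) ^ n * of_nat (stirling n m) * of_nat (m choose i) * (- z) ^ i / R ^ m) * X ^ (case p of (m, i) \<Rightarrow> m - i))"
proof -
  have "falling ((- X + z) / R) n = (-1) ^ n * (\<Sum>m\<le>n. of_nat (stirling n m) * ((-z + X) / R) ^ m)"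
    by (simp add: falling_poch stirling_pochhammer[symmetric] minus_divide_left)
  also have "\<dots> = (\<Sum>m\<le>n. \<Sum>i\<le>m. ((-1) ^ n * of_nat (stirling n m) * of_nat (m choose i) * (- z) ^ i / R ^ m) * X ^ (m - i))"
    unfolding sum_distrib_left
  proof (intro sum.cong refl)
    fix m
    have "((-z + X) / R) ^ m = (\<Sum>i\<le>m. of_nat (m choose i) * (-z) ^ i * X ^ (m - i)) / R ^ m"
      unfolding power_divide binomial_ring ..
    then show "(-1) ^ n * (of_nat (stirling n m) * ((-z + X) / R) ^ m) =
        (\<Sum>i\<le>m. (-1) ^ n * of_nat (stirling n m) * of_nat (m choose i) * (- z) ^ i / R ^ m * X ^ (m - i))"
      by (simp add: sum_distrib_left sum_divide_distrib mult_ac)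
  qed
  also have "\<dots> = (\<Sum>p\<in>Sigma {..n} (\<lambda>m. {..m}). (case p of (m, i) \<Rightarrow>
        (-1) ^ n * of_nat (stirling n m) * of_nat (m choose i) * (- z) ^ i / R ^ m) * X ^ (case p of (m, i) \<Rightarrow> m - i))"
    by (subst sum.Sigma) (auto simp: case_prod_beta)
  finally show ?thesis .
qed

lemma aux3:
  fixes R a b :: complex
  assumes "R \<noteq> 0" "m \<le> n"
  shows "R ^ n * (a / R ^ m / b) = R ^ (n - m) * (a / b)"
proof -
  have "R ^ n = R ^ (n - m) * R ^ m" using assms(2) by (simp add: power_add[symmetric])
  then show ?thesis using assms(1) by (simp add: field_simps)
qed

lemma aux4:
  fixes R z s Qv :: complex
  assumes "R \<noteq> 0" "l \<le> n"
  shows "s * of_nat (l choose j) * (- z / R) ^ (l - j) * R ^ (n - j) / Qv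
       = s * R ^ (n - l) * (of_nat (l choose j) * (- z) ^ (l - j) / Qv)"
proof (cases "j \<le> l")
  case True
  have "R ^ (n - j) = R ^ (l - j) * R ^ (n - l)" using True assms(2) by (simp add: power_add[symmetric])
  then have "s * of_nat (l choose j) * (- z / R) ^ (l - j) * R ^ (n - j) / Qv
      = s * of_nat (l choose j) * ((- z / R) ^ (l - j) * R ^ (l - j)) * R ^ (n - l) / Qv"
    by (simp add: mult_ac)
  also have "(- z / R) ^ (l - j) * R ^ (l - j) = (- z) ^ (l - j)"
    unfolding power_mult_distrib[symmetric] using assms(1) by simp
  finally show ?thesis by (simp add: mult_ac)
next
  case False then show ?thesis by simp
qed

lemma sum_Sigma_nested:
  "(\<Sum>p\<in>Sigma {..n} (\<lambda>m. {..(m::nat)}). g p) = (\<Sum>m\<le>n. \<Sum>i\<le>m. g (m, i))"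
  by (subst sum.Sigma) auto

theorem theorem4:
  fixes n k :: nat and \<rho> q :: real and z :: complex
  assumes "k \<ge> 1" and "\<rho> \<noteq> 0" and "0 \<le> q" and "q < 1"
  shows "qpolycauchy2 n \<rho> q k z =
           (-1) ^ n * (\<Sum>m\<le>n. of_nat (stirling n m) * of_real \<rho> ^ (n - m) *
              (\<Sum>i\<le>m. of_nat (m choose i) * (- z) ^ i / of_real (qnum q (m - i + 1) ^ k)))
       \<and> qpolycauchy2 n \<rho> q k z =
           (-1) ^ n * (\<Sum>m\<le>n. weighted_stirling1 n m (- z / of_real \<rho>) *
              of_real \<rho> ^ (n - m) / of_real (qnum q (m + 1) ^ k))"
proof -
  define R where "R = complex_of_real \<rho>"
  have R: "R \<noteq> 0" using assms(2) by (simp add: R_def)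
  define S where "S = Sigma {..n} (\<lambda>m. {..(m::nat)})"
  define c where "c = (\<lambda>p. case p of (m, i) \<Rightarrow>
        (-1) ^ n * of_nat (stirling n m) * of_nat (m choose i) * (- z) ^ i / R ^ m)"
  define e where "e = (\<lambda>p::nat \<times> nat. case p of (m, i) \<Rightarrow> m - i)"
  have fS: "finite S" unfolding S_def by auto
  have fun_eq: "(\<lambda>xs. falling ((- complex_of_real (prod_list xs) + z) / R) n)
      = (\<lambda>xs. \<Sum>p\<in>S. c p * complex_of_real (prod_list xs) ^ e p)"
    unfolding c_def e_def S_def by (rule ext) (rule pointwise[OF R])
  have "qpolycauchy2 n \<rho> q k z = R ^ n * (\<Sum>p\<in>S. c p / complex_of_real (qnum q (e p + 1)) ^ k)"
    unfolding qpolycauchy2_def R_def[symmetric] fun_eq multi_jack[OF assms(3,4) fS] ..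
  also have "\<dots> = (\<Sum>m\<le>n. \<Sum>i\<le>m. R ^ n * (c (m, i) / complex_of_real (qnum q (e (m, i) + 1)) ^ k))"
    unfolding S_def sum_Sigma_nested sum_distrib_left ..
  also have "\<dots> = (\<Sum>m\<le>n. \<Sum>i\<le>m. (-1) ^ n * (of_nat (stirling n m) * R ^ (n - m) *
              (of_nat (m choose i) * (- z) ^ i / of_real (qnum q (m - i + 1) ^ k))))"
  proof (intro sum.cong refl)
    fix m i assume m: "m \<in> {..n}" and i: "i \<in> {..m}"
    have "R ^ n * (c (m, i) / complex_of_real (qnum q (e (m, i) + 1)) ^ k)
        = R ^ n * (((-1) ^ n * of_nat (stirling n m) * of_nat (m choose i) * (- z) ^ i) / R ^ m
             / complex_of_real (qnum q (m - i + 1)) ^ k)"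
      by (simp add: c_def e_def)
    also have "\<dots> = R ^ (n - m) * (((-1) ^ n * of_nat (stirling n m) * of_nat (m choose i) * (- z) ^ i)
             / complex_of_real (qnum q (m - i + 1)) ^ k)"
      using m by (intro aux3 R) auto
    finally show "R ^ n * (c (m, i) / complex_of_real (qnum q (e (m, i) + 1)) ^ k) =
        (-1) ^ n * (of_nat (stirling n m) * R ^ (n - m) *
              (of_nat (m choose i) * (- z) ^ i / of_real (qnum q (m - i + 1) ^ k)))"
      by (simp add: mult_ac)
  qed
  also have "\<dots> = (-1) ^ n * (\<Sum>m\<le>n. of_nat (stirling n m) * R ^ (n - m) *
              (\<Sum>i\<le>m. of_nat (m choose i) * (- z) ^ i / of_real (qnum q (m - i + 1) ^ k)))"
    by (simp add: sum_distrib_left)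
  finally have eq1: "qpolycauchy2 n \<rho> q k z = (-1) ^ n * (\<Sum>m\<le>n. of_nat (stirling n m) * R ^ (n - m) *
              (\<Sum>i\<le>m. of_nat (m choose i) * (- z) ^ i / of_real (qnum q (m - i + 1) ^ k)))" .
  define QQ where "QQ j = complex_of_real (qnum q j ^ k)" for j
  have "(\<Sum>j\<le>n. weighted_stirling1 n j (- z / R) * R ^ (n - j) / QQ (j + 1))
      = (\<Sum>j\<le>n. \<Sum>l\<le>n. of_nat (stirling n l) * of_nat (l choose j) * (- z / R) ^ (l - j) * R ^ (n - j) / QQ (j + 1))"
    by (intro sum.cong refl) (simp add: ww_weighted ww_explicit sum_distrib_right sum_divide_distrib)
  also have "\<dots> = (\<Sum>l\<le>n. \<Sum>j\<le>n. of_nat (stirling n l) * of_nat (l choose j) * (- z / R) ^ (l - j) * R ^ (n - j) / QQ (j + 1))"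
    by (rule sum.swap)
  also have "\<dots> = (\<Sum>l\<le>n. \<Sum>j\<le>n. of_nat (stirling n l) * R ^ (n - l) * (of_nat (l choose j) * (- z) ^ (l - j) / QQ (j + 1)))"
    by (intro sum.cong refl, rule aux4[OF R], simp)
  also have "\<dots> = (\<Sum>l\<le>n. \<Sum>j\<le>l. of_nat (stirling n l) * R ^ (n - l) * (of_nat (l choose j) * (- z) ^ (l - j) / QQ (j + 1)))"
    by (intro sum.cong refl sum.mono_neutral_right) auto
  also have "\<dots> = (\<Sum>l\<le>n. \<Sum>i\<le>l. of_nat (stirling n l) * R ^ (n - l) * (of_nat (l choose i) * (- z) ^ i / QQ (l - i + 1)))"
  proof (rule sum.cong[OF refl])
    fix l
    show "(\<Sum>j\<le>l. of_nat (stirling n l) * R ^ (n - l) * (of_nat (l choose j) * (- z) ^ (l - j) / QQ (j + 1)))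
       = (\<Sum>i\<le>l. of_nat (stirling n l) * R ^ (n - l) * (of_nat (l choose i) * (- z) ^ i / QQ (l - i + 1)))"
      by (rule sum.reindex_bij_witness[of _ "\<lambda>i. l - i" "\<lambda>i. l - i"])
        (auto, (metis binomial_symmetric)+)
  qed
  also have "\<dots> = (\<Sum>m\<le>n. of_nat (stirling n m) * R ^ (n - m) *
              (\<Sum>i\<le>m. of_nat (m choose i) * (- z) ^ i / QQ (m - i + 1)))"
    by (simp add: sum_distrib_left)
  finally have eq2: "(\<Sum>j\<le>n. weighted_stirling1 n j (- z / R) * R ^ (n - j) / QQ (j + 1))
     = (\<Sum>m\<le>n. of_nat (stirling n m) * R ^ (n - m) *
              (\<Sum>i\<le>m. of_nat (m choose i) * (- z) ^ i / QQ (m - i + 1)))" .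
  show ?thesis
    using eq1 eq2 unfolding R_def QQ_def by simp
qed


end
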